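(* Let $m$ be an integer. (i) If $m=N_1(1+(x-1)^3h(x))$ for some $h\in\mathbb Z[x]$ with $5\nmid h(1)$, then there is $F\in\mathbb Z[x]$ with $M_{25}(F)=5^3m$, $F(1)=N_2(F)=5$ and $N_1(F)=5m$. (ii) If $m=N_2(1+(x-1)^3h(x))$ for some $h\in\mathbb Z[x]$ with $5\nmid h(1)$, then there is $F\in\mathbb Z[x]$ with $M_{25}(F)=5^3m$, $F(1)=N_1(F)=5$ and $N_2(F)=5m$.
   Context: $M_{25}(F)=\prod_{z^{25}=1}F(z)$. For $k\geq1$, $\omega_k=e^{2\pi i/5^k}$ and $N_k(F)=\prod_{1\leq j\leq 5^k,\ 5\nmid j}F(\omega_k^j)$. *)

theory Defs
  imports "HOL-Analysis.Analysis" "HOL-Computational_Algebra.Polynomial"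
begin

definition cpoly :: "int poly \<Rightarrow> complex \<Rightarrow> complex" where
  "cpoly F z = poly (map_poly of_int F) z"

definition M25 :: "int poly \<Rightarrow> complex" where
  "M25 F = (\<Prod>z\<in>{z::complex. z ^ 25 = 1}. cpoly F z)"

definition omega :: "nat \<Rightarrow> complex" where
  "omega k = exp (2 * pi * \<i> / of_nat (5 ^ k))"

definition Nk :: "nat \<Rightarrow> int poly \<Rightarrow> complex" where
  "Nk k F = (\<Prod>j\<in>{j\<in>{1..5 ^ k}. \<not> (5::nat) dvd j}. cpoly F (omega k ^ j))"

end

theory Submission
  imports Defs "HOL-Computational_Algebra.Fundamental_Theorem_Algebra"
begin


lemma mpi_add: "map_poly (of_int :: int \<Rightarrow> complex) (p + q) = map_poly of_int p + map_poly of_int q"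
  by (rule poly_eqI) (simp add: coeff_map_poly)
lemma mpi_minus: "map_poly (of_int :: int \<Rightarrow> complex) (- p) = - map_poly of_int p"
  by (rule poly_eqI) (simp add: coeff_map_poly)
lemma mpi_diff: "map_poly (of_int :: int \<Rightarrow> complex) (p - q) = map_poly of_int p - map_poly of_int q"
  by (rule poly_eqI) (simp add: coeff_map_poly)
lemma mpi_mult: "map_poly (of_int :: int \<Rightarrow> complex) (p * q) = map_poly of_int p * map_poly of_int q"
  by (rule poly_eqI) (simp add: coeff_map_poly coeff_mult)

lemma cpoly_add[simp]: "cpoly (p + q) z = cpoly p z + cpoly q z"
  by (simp add: cpoly_def mpi_add)
lemma cpoly_minus[simp]: "cpoly (- p) z = - cpoly p z"
  by (simp add: cpoly_def mpi_minus)
lemma cpoly_diff[simp]: "cpoly (p - q) z = cpoly p z - cpoly q z"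
  by (simp add: cpoly_def mpi_diff)
lemma cpoly_mult[simp]: "cpoly (p * q) z = cpoly p z * cpoly q z"
  by (simp add: cpoly_def mpi_mult)
lemma cpoly_pCons[simp]: "cpoly (pCons a p) z = of_int a + z * cpoly p z"
  by (simp add: cpoly_def map_poly_pCons)
lemma cpoly_0[simp]: "cpoly 0 z = 0"
  by (simp add: cpoly_def)
lemma cpoly_1[simp]: "cpoly 1 z = 1"
  by (simp add: cpoly_def)
lemma cpoly_smult[simp]: "cpoly (smult a p) z = of_int a * cpoly p z"
proof -
  have "smult a p = [:a:] * p" by simp
  then show ?thesis by (simp only: cpoly_mult) simp
qed
lemma cpoly_power[simp]: "cpoly (p ^ n) z = cpoly p z ^ n"
  by (induction n) auto
lemma cpoly_monom[simp]: "cpoly (monom a n) z = of_int a * z ^ n"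
  by (simp add: cpoly_def map_poly_monom poly_monom)
lemma cpoly_sum: "cpoly (\<Sum>i\<in>A. f i) z = (\<Sum>i\<in>A. cpoly (f i) z)"
  by (induction A rule: infinite_finite_induct) auto
lemma cpoly_pcompose: "cpoly (pcompose p q) z = cpoly p (cpoly q z)"
  by (induction p) (auto simp: pcompose_pCons)
lemma cpoly_int: "cpoly p (of_int x) = of_int (poly p x)"
  by (induction p) auto



lemma omega_pow: "omega k ^ j = exp (2 * of_real pi * \<i> * of_nat j / of_nat (5 ^ k))"
proof -
  have "omega k ^ j = exp (of_nat j * (2 * pi * \<i> / of_nat (5 ^ k)))"
    by (simp add: omega_def exp_of_nat_mult[symmetric])
  then show ?thesis by (simp add: field_simps)
qed

lemma omega_pow_eq: "omega k ^ i = omega k ^ j \<longleftrightarrow> i mod 5^k = j mod 5^k"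
  unfolding omega_pow by (rule complex_root_unity_eq) simp

lemma omega_pow_1: "omega k ^ j = 1 \<longleftrightarrow> 5^k dvd j"
  unfolding omega_pow by (rule complex_root_unity_eq_1) simp

definition Aset :: "nat \<Rightarrow> complex set" where
  "Aset k = {z. z ^ (5^k) = 1 \<and> z ^ (5^(k-1)) \<noteq> 1}"

definition Sset :: "nat \<Rightarrow> nat set" where
  "Sset k = {j\<in>{1..5 ^ k}. \<not> (5::nat) dvd j}"

lemma inj_S: assumes "k \<ge> 1" shows "inj_on (\<lambda>j. omega k ^ j) (Sset k)"
proof (rule inj_onI)
  fix i j assume i: "i \<in> Sset k" and j: "j \<in> Sset k" and e: "omega k ^ i = omega k ^ j"
  have "i \<noteq> 5^k" "j \<noteq> 5^k" using i j assms by (auto simp: Sset_def)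
  then have "i < 5^k" "j < 5^k" using i j by (auto simp: Sset_def)
  with e show "i = j" by (simp add: omega_pow_eq)
qed

lemma img_S:
  assumes "k \<ge> 1"
  shows "(\<lambda>j. omega k ^ j) ` Sset k = Aset k"
proof
  have n: "(5::nat)^k = 5 * 5^(k-1)" using assms by (cases k) auto
  show "(\<lambda>j. omega k ^ j) ` Sset k \<subseteq> Aset k"
  proof
    fix z assume "z \<in> (\<lambda>j. omega k ^ j) ` Sset k"
    then obtain j where j: "j \<in> Sset k" and z: "z = omega k ^ j" by auto
    have "z ^ (5^k) = (omega k ^ (5^k)) ^ j" by (simp add: z power_mult[symmetric] mult.commute)
    also have "omega k ^ (5^k) = 1" by (simp add: omega_pow_1)
    finally have 1: "z ^ (5^k) = 1" by simp
    have "\<not> 5^k dvd (j * 5^(k-1))"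
    proof
      assume "5^k dvd (j * 5^(k-1))"
      then have "5 * 5^(k-1) dvd j * 5^(k-1)" using n by simp
      then have "5 dvd j" by simp
      with j show False by (simp add: Sset_def)
    qed
    then have "z ^ (5^(k-1)) \<noteq> 1" by (simp add: z power_mult[symmetric] omega_pow_1)
    with 1 show "z \<in> Aset k" by (simp add: Aset_def)
  qed
  show "Aset k \<subseteq> (\<lambda>j. omega k ^ j) ` Sset k"
  proof
    fix z assume z: "z \<in> Aset k"
    then have "z \<in> {z::complex. z ^ (5^k) = 1}" by (simp add: Aset_def)
    also have "\<dots> = {exp(2 * of_real pi * \<i> * of_nat j / of_nat (5^k)) | j. j < 5^k}"
      by (rule complex_roots_unity) simp
    finally obtain j where j: "j < 5^k" and zj: "z = omega k ^ j" by (auto simp: omega_pow)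
    have "\<not> 5 dvd j"
    proof
      assume "5 dvd j"
      then have "5^k dvd j * 5^(k-1)" using n by (simp add: mult_dvd_mono)
      then have "z ^ (5^(k-1)) = 1" by (simp add: zj power_mult[symmetric] omega_pow_1)
      with z show False by (simp add: Aset_def)
    qed
    moreover have "j \<noteq> 0" using \<open>\<not> 5 dvd j\<close> by (metis dvd_0_right)
    ultimately have "j \<in> Sset k" using j by (auto simp: Sset_def)
    with zj show "z \<in> (\<lambda>j. omega k ^ j) ` Sset k" by auto
  qed
qed

lemma Nk_alt: "k \<ge> 1 \<Longrightarrow> Nk k F = (\<Prod>z\<in>Aset k. cpoly F z)"
  unfolding Nk_def Sset_def[symmetric]
  by (subst img_S[symmetric], assumption, subst prod.reindex[OF inj_S], assumption) simp



lemma unity_prod: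
  assumes "n > 0"
  shows "(\<Prod>z\<in>{z::complex. z^n = 1}. [:-z,1:]) = monom 1 n - 1"
proof -
  let ?p = "monom (1::complex) n - 1"
  have deg: "degree ?p = n" using degree_add_eq_left[of "-1" "monom (1::complex) n"] assms
    by (simp add: degree_monom_eq)
  have lc: "lead_coeff ?p = 1" using assms by (simp add: deg)
  have roots: "{z. poly ?p z = 0} = {z. z^n = 1}" by (simp add: poly_monom)
  have "rsquarefree ?p"
    unfolding rsquarefree_roots
  proof (intro allI notI)
    fix a assume "poly ?p a = 0 \<and> poly (pderiv ?p) a = 0"
    then have "a ^ n = 1" "of_nat n * a ^ (n - 1) = 0"
      by (auto simp: poly_monom pderiv_monom pderiv_diff)
    moreover have "a \<noteq> 0" using \<open>a ^ n = 1\<close> assms by (metis power_0_left not_gr0 zero_neq_one)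
    moreover have "of_nat n \<noteq> (0::complex)" using assms by simp
    ultimately show False by simp
  qed
  from complex_poly_decompose_rsquarefree[OF this] lc roots show ?thesis by simp
qed

lemma poly_fun_eq: "(\<And>x. poly p x = poly q (x::complex)) \<Longrightarrow> p = q"
  using poly_eq_poly_eq_iff by blast

lemma A1_eq: "Aset 1 = {z. z^5 = 1} - {1}" by (auto simp: Aset_def)
lemma pow25: "x^5 = 1 \<Longrightarrow> x^25 = (1::complex)"
proof -
  assume "x^5 = 1"
  moreover have "x^25 = (x^5)^5" by (simp flip: power_mult)
  ultimately show ?thesis by simp
qed

lemma A2_eq: "Aset 2 = {z. z^25 = 1} - {z. z^5 = 1}" by (auto simp: Aset_def)

lemma fin_A: "finite (Aset k)"
  by (rule finite_subset[of _ "{z. z^(5^k) = 1}"]) (auto simp: Aset_def intro: finite_roots_unity)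

definition Phi25c :: "complex poly" where "Phi25c = (\<Sum>i<5. monom 1 (5*i))"

lemma prodA1: "(\<Prod>z\<in>Aset 1. [:-z,1:]) = [:1,1,1,1,1:]"
proof -
  have U: "{z::complex. z^5 = 1} = insert 1 (Aset 1)" by (auto simp: Aset_def)
  have "(\<Prod>z\<in>{z::complex. z^5 = 1}. [:-z,1:]) = [:-1,1:] * (\<Prod>z\<in>Aset 1. [:-z,1:])"
    unfolding U by (subst prod.insert[OF fin_A]) (auto simp: Aset_def)
  then have "[:-1,1:] * (\<Prod>z\<in>Aset 1. [:-z,1:]) = monom 1 5 - 1"
    using unity_prod[of 5] by simp
  also have "\<dots> = [:-1,1:] * [:1,1,1,1,1:]"
    by (intro poly_fun_eq) (simp add: poly_monom algebra_simps eval_nat_numeral)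
  finally have "[:-1,1:] * (\<Prod>z\<in>Aset 1. [:-z,1:]) = [:-1,1:] * [:1,1,1,1,1:]" .
  moreover have nz: "[:-1,1:] \<noteq> (0::complex poly)" by simp
  ultimately show ?thesis using mult_left_cancel[OF nz] by blast
qed

lemma prodA2: "(\<Prod>z\<in>Aset 2. [:-z,1:]) = Phi25c"
proof -
  have U: "{z::complex. z^25 = 1} = {z. z^5 = 1} \<union> Aset 2" by (auto simp: A2_eq pow25)
  have "(\<Prod>z\<in>{z::complex. z^25 = 1}. [:-z,1:]) = (\<Prod>z\<in>{z::complex. z^5 = 1}. [:-z,1:]) * (\<Prod>z\<in>Aset 2. [:-z,1:])"
    unfolding U by (subst prod.union_disjoint) (auto simp: fin_A A2_eq finite_roots_unity)
  then have "(monom 1 5 - 1) * (\<Prod>z\<in>Aset 2. [:-z,1:]) = (monom 1 5 - 1) * Phi25c"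
  proof -
    have "(monom 1 5 - 1) * (\<Prod>z\<in>Aset 2. [:-z,1:]) = (\<Prod>z\<in>{z::complex. z^25 = 1}. [:-z,1:])"
      using \<open>?this\<close> unity_prod[of 5] by simp
    also have "\<dots> = monom 1 25 - 1" using unity_prod[of 25] by simp
    also have "\<dots> = (monom 1 5 - 1) * Phi25c"
      by (intro poly_fun_eq) (simp add: poly_monom algebra_simps eval_nat_numeral Phi25c_def poly_sum)
    finally show ?thesis .
  qed
  moreover have "(monom (1::complex) 5 - 1) \<noteq> 0"
  proof
    assume "(monom (1::complex) 5 - 1) = 0"
    then have "poly (monom (1::complex) 5 - 1) 0 = 0" by simp
    then show False by (simp add: poly_monom)
  qed
  ultimately show ?thesis by simp
qed

lemma N1_lin: "(\<Prod>z\<in>Aset 1. 1 - z) = 5"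
proof -
  have "(\<Prod>z\<in>Aset 1. 1 - z) = poly (\<Prod>z\<in>Aset 1. [:-z,1:]) 1"
    by (simp add: poly_prod)
  also have "\<dots> = 5" unfolding prodA1 by simp
  finally show ?thesis .
qed

lemma N2_lin: "(\<Prod>z\<in>Aset 2. 1 - z) = 5"
proof -
  have "(\<Prod>z\<in>Aset 2. 1 - z) = poly (\<Prod>z\<in>Aset 2. [:-z,1:]) 1"
    by (simp add: poly_prod)
  also have "\<dots> = 5" unfolding prodA2 by (simp add: Phi25c_def poly_sum poly_monom eval_nat_numeral)
  finally show ?thesis .
qed



lemma A_25: "k \<in> {1,2} \<Longrightarrow> z \<in> Aset k \<Longrightarrow> z^25 = 1"
  by (auto simp: Aset_def pow25)

lemma pow_cd: "c * d mod 25 = 1 \<Longrightarrow> (z::complex)^25 = 1 \<Longrightarrow> (z^c)^d = z"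
proof -
  assume cd: "c * d mod 25 = 1" and z: "z^25 = 1"
  have "c * d = 25 * (c * d div 25) + 1" using cd by (metis mult_div_mod_eq)
  then have "(z^c)^d = (z^25)^(c * d div 25) * z"
    by (metis power_mult power_add power_one_right)
  with z show ?thesis by simp
qed

lemma pow_A:
  assumes k: "k \<in> {1,2}" and cd: "c * d mod 25 = 1" and z: "z \<in> Aset k"
  shows "z^c \<in> Aset k"
proof -
  have z25: "z^25 = 1" using A_25[OF k z] .
  have "(z^c)^(5^k) = (z^(5^k))^c" by (simp flip: power_mult add: mult.commute)
  then have 1: "(z^c)^(5^k) = 1" using z by (simp add: Aset_def)
  have "(z^c)^(5^(k-1)) \<noteq> 1"
  proof
    assume "(z^c)^(5^(k-1)) = 1"
    then have "((z^c)^d)^(5^(k-1)) = 1"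
      by (metis (no_types, lifting) power_mult mult.commute power_one)
    then have "z^(5^(k-1)) = 1" using pow_cd[OF cd z25] by simp
    with z show False by (simp add: Aset_def)
  qed
  with 1 show ?thesis by (simp add: Aset_def)
qed

lemma bij_pow:
  assumes k: "k \<in> {1,2}" and cd: "c * d mod 25 = 1"
  shows "bij_betw (\<lambda>z. z^c) (Aset k) (Aset k)"
proof (rule bij_betwI[where g = "\<lambda>z. z^d"])
  have dc: "d * c mod 25 = 1" using cd by (simp add: mult.commute)
  show "(\<lambda>z. z^c) \<in> Aset k \<rightarrow> Aset k" using pow_A[OF k cd] by auto
  show "(\<lambda>z. z^d) \<in> Aset k \<rightarrow> Aset k" using pow_A[OF k dc] by auto
  show "\<And>x. x \<in> Aset k \<Longrightarrow> (x^c)^d = x" using pow_cd[OF cd] A_25[OF k] by blast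
  show "\<And>x. x \<in> Aset k \<Longrightarrow> (x^d)^c = x" using pow_cd[OF dc] A_25[OF k] by blast
qed

lemma exists_inv: "c \<in> {1,2,3,4::nat} \<Longrightarrow> \<exists>d. c * d mod 25 = 1"
proof -
  assume "c \<in> {1,2,3,4::nat}"
  then consider "c = 1" | "c = 2" | "c = 3" | "c = 4" by auto
  then show ?thesis
  proof cases
    case 1 then show ?thesis by (intro exI[of _ 1]) simp
  next
    case 2 then show ?thesis by (intro exI[of _ 13]) simp
  next
    case 3 then show ?thesis by (intro exI[of _ 17]) simp
  next
    case 4 then show ?thesis by (intro exI[of _ 19]) simp
  qed
qed

lemma prod_perm:
  assumes "k \<in> {1,2}" "c \<in> {1,2,3,4::nat}"
  shows "(\<Prod>z\<in>Aset k. g (z^c)) = (\<Prod>z\<in>Aset k. g z)"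
proof -
  obtain d where "c * d mod 25 = 1" using exists_inv[OF assms(2)] by blast
  from prod.reindex_bij_betw[OF bij_pow[OF assms(1) this]] show ?thesis .
qed

lemma M25_split: "M25 F = cpoly F 1 * Nk 1 F * Nk 2 F"
proof -
  have U: "{z::complex. z^25 = 1} = insert 1 (Aset 1 \<union> Aset 2)"
    by (auto simp: Aset_def pow25)
  have "M25 F = cpoly F 1 * ((\<Prod>z\<in>Aset 1. cpoly F z) * (\<Prod>z\<in>Aset 2. cpoly F z))"
    unfolding M25_def U
    by (subst prod.insert, simp add: fin_A, simp add: Aset_def, subst prod.union_disjoint[OF fin_A fin_A])
       (auto simp: Aset_def)
  then show ?thesis by (simp add: Nk_alt)
qed



definition P5 :: "int poly" where "P5 = [:1,1,1,1,1:]"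
definition P25 :: "int poly" where "P25 = monom 1 20 + monom 1 15 + monom 1 10 + monom 1 5 + 1"
definition Sc :: "nat \<Rightarrow> int poly" where "Sc c = (\<Sum>i<c. monom 1 i)"
definition Hc :: "int poly \<Rightarrow> nat \<Rightarrow> int poly" where "Hc h c = Sc c ^ 3 * pcompose h (monom 1 c)"
definition Gp :: "int poly \<Rightarrow> int poly" where "Gp h = 1 + [:-1, 1:] ^ 3 * h"
definition Up :: "int poly" where
  "Up = 1 + [:0,-1,2,-2,1:] * (monom 1 15 + monom 2 10 + monom 3 5 + [:4:])"

lemma cpoly_P5: "cpoly P5 z = 1 + z + z^2 + z^3 + z^4"
  by (simp add: P5_def algebra_simps eval_nat_numeral)
lemma cpoly_P25: "cpoly P25 z = z^20 + z^15 + z^10 + z^5 + 1"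
  by (simp add: P25_def)
lemma cpoly_G: "cpoly (Gp h) z = 1 + (z - 1)^3 * cpoly h z"
  by (simp add: Gp_def)
lemma cpoly_Hc: "cpoly (Hc h c) z * (z - 1)^3 = (z^c - 1)^3 * cpoly h (z^c)"
proof -
  have "cpoly (Sc c) z * (z - 1) = z^c - 1"
    by (simp add: Sc_def cpoly_sum power_diff_1_eq mult.commute)
  then show ?thesis
    by (simp add: Hc_def cpoly_pcompose power_mult_distrib[symmetric] mult_ac)
qed
lemma cpoly_Up: "cpoly Up z = 1 + (-z + 2*z^2 - 2*z^3 + z^4) * (z^15 + 2*z^10 + 3*z^5 + 4)"
  unfolding Up_def by (simp only: cpoly_add cpoly_mult cpoly_1 cpoly_0 cpoly_pCons cpoly_monom, simp, algebra)

lemma poly_Hc1: "poly (Hc h c) 1 = int c ^ 3 * poly h 1"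
  by (simp add: Hc_def Sc_def poly_sum poly_pcompose poly_monom)

lemma cpoly_one: "cpoly p 1 = of_int (poly p 1)"
  using cpoly_int[of p 1] by simp

lemma A1_props: "z \<in> Aset 1 \<Longrightarrow> cpoly P5 z = 0 \<and> cpoly P25 z = 5"
proof -
  assume "z \<in> Aset 1"
  then have z5: "z^5 = 1" and z1: "z \<noteq> 1" by (auto simp: Aset_def)
  have "(z - 1) * cpoly P5 z = z^5 - 1" by (simp add: cpoly_P5 algebra_simps eval_nat_numeral)
  with z5 z1 have "cpoly P5 z = 0" by simp
  moreover have "z^20 = (z^5)^4" "z^15 = (z^5)^3" "z^10 = (z^5)^2" by (simp_all flip: power_mult)
  ultimately show ?thesis using z5 by (simp add: cpoly_P25)
qed

lemma A2_props: "z \<in> Aset 2 \<Longrightarrow> cpoly P25 z = 0"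
proof -
  assume "z \<in> Aset 2"
  then have z25: "z^25 = 1" and z5: "z^5 \<noteq> 1" by (auto simp: Aset_def)
  have "(z^5 - 1) * cpoly P25 z = z^25 - 1" by (simp add: cpoly_P25 algebra_simps eval_nat_numeral)
  with z5 z25 show "cpoly P25 z = 0" by simp
qed



lemma c_props1:
  fixes h1 :: int assumes "\<not> 5 dvd h1"
  shows "nat (h1 mod 5) \<in> {1,2,3,4} \<and> 5 dvd (1 - int (nat (h1 mod 5))^3 * h1)"
proof -
  define r where "r = h1 mod 5"
  have r: "r = 1 \<or> r = 2 \<or> r = 3 \<or> r = 4" using assms unfolding r_def by presburger
  have "(r^3 * h1) mod 5 = (r^3 * r) mod 5" unfolding r_def by (metis mod_mult_right_eq)
  also have "\<dots> = 1" using r by (elim disjE) simp_all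
  finally have "(1::int) mod 5 = (r^3 * h1) mod 5" by simp
  then have "5 dvd (1 - r^3 * h1)" by (simp only: mod_eq_dvd_iff)
  moreover have "int (nat r) = r" using r by auto
  moreover have "nat r \<in> {1,2,3,4}" using r by (elim disjE) simp_all
  ultimately show ?thesis unfolding r_def by simp
qed

lemma c_props2:
  fixes h1 :: int assumes "\<not> 5 dvd h1"
  shows "nat ((-h1) mod 5) \<in> {1,2,3,4} \<and> 5 dvd (1 + int (nat ((-h1) mod 5))^3 * h1)"
proof -
  define r where "r = (-h1) mod 5"
  have r: "r = 1 \<or> r = 2 \<or> r = 3 \<or> r = 4" using assms unfolding r_def by presburger
  have "(r^3 * (-h1)) mod 5 = (r^3 * r) mod 5" unfolding r_def by (metis mod_mult_right_eq)
  also have "\<dots> = 1" using r by (elim disjE) simp_all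
  finally have "(r^3 * (-h1)) mod 5 = 1 mod 5" by simp
  then have "5 dvd (r^3 * (-h1) - 1)" by (simp only: mod_eq_dvd_iff)
  then have "5 dvd (1 + r^3 * h1)" by (metis dvd_minus_iff minus_diff_eq mult_minus_right diff_conv_add_uminus add.commute minus_add_distrib)
  moreover have "int (nat r) = r" using r by auto
  moreover have "nat r \<in> {1,2,3,4}" using r by (elim disjE) simp_all
  ultimately show ?thesis unfolding r_def by simp
qed



lemma alg1:
  fixes X z W :: complex
  assumes "X * (z - 1)^3 = W" "1 + z + z^2 + z^3 + z^4 = 0"
  shows "1 - z + 5 * ((z - z^2 + z^3) * X) = (1 - z) * (1 + W)"
proof -
  have "1 - z + 5 * ((z - z^2 + z^3) * X) - (1 - z) * (1 + X * (z - 1)^3) = X * (1 + z + z^2 + z^3 + z^4)"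
    by (simp add: algebra_simps eval_nat_numeral)
  then show ?thesis using assms by simp
qed

lemma part1:
  assumes h: "\<not> (5::int) dvd poly h 1" and hm: "of_int m = Nk 1 (1 + [:-1, 1:] ^ 3 * h)"
  shows "\<exists>F :: int poly. M25 F = of_int (5 ^ 3 * m) \<and> poly F 1 = 5 \<and>
                 Nk 2 F = 5 \<and> Nk 1 F = of_int (5 * m)"
proof -
  define h1 where "h1 = poly h 1"
  define c where "c = nat (h1 mod 5)"
  have c: "c \<in> {1,2,3,4}" and dv: "5 dvd (1 - int c^3 * h1)"
    using c_props1[of h1] h unfolding c_def h1_def by auto
  define k where "k = (1 - int c^3 * h1) div 5"
  have k: "5 * k = 1 - int c^3 * h1" using dv unfolding k_def by simp
  define F where "F = [:1,-1:] + P25 * ([:0,1,-1,1:] * Hc h c + [:k:] * P5)"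
  have F1: "poly F 1 = 5"
  proof -
    have "poly F 1 = 5 * (int c^3 * h1 + k * 5)"
      by (simp add: F_def P25_def P5_def poly_Hc1 poly_monom h1_def)
    also have "\<dots> = 5" using k by algebra
    finally show ?thesis .
  qed
  have onA1: "cpoly F z = (1 - z) * cpoly (Gp h) (z^c)" if z: "z \<in> Aset 1" for z
  proof -
    from A1_props[OF z] have p5: "cpoly P5 z = 0" and p25: "cpoly P25 z = 5" by auto
    have rel: "cpoly (Hc h c) z * (z - 1)^3 = (z^c - 1)^3 * cpoly h (z^c)" by (rule cpoly_Hc)
    have p5': "1 + z + z^2 + z^3 + z^4 = 0" using p5 by (simp add: cpoly_P5)
    have "cpoly F z = (1 - z) + 5 * ((z - z^2 + z^3) * cpoly (Hc h c) z)"
      by (simp add: F_def p5 p25 algebra_simps eval_nat_numeral)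
    also have "\<dots> = (1 - z) * (1 + (z^c - 1)^3 * cpoly h (z^c))"
      using alg1[OF rel p5'] .
    finally show ?thesis by (simp add: cpoly_G)
  qed
  have onA2: "cpoly F z = 1 - z" if z: "z \<in> Aset 2" for z
    using A2_props[OF z] by (simp add: F_def)
  have N1: "Nk 1 F = of_int (5 * m)"
  proof -
    have "Nk 1 F = (\<Prod>z\<in>Aset 1. (1 - z) * cpoly (Gp h) (z^c))"
      by (simp add: Nk_alt onA1)
    also have "\<dots> = (\<Prod>z\<in>Aset 1. 1 - z) * (\<Prod>z\<in>Aset 1. cpoly (Gp h) (z^c))"
      by (rule prod.distrib)
    also have "(\<Prod>z\<in>Aset 1. cpoly (Gp h) (z^c)) = (\<Prod>z\<in>Aset 1. cpoly (Gp h) z)"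
      by (rule prod_perm[OF _ c]) simp
    also have "\<dots> = Nk 1 (Gp h)" by (simp add: Nk_alt)
    also have "\<dots> = of_int m" using hm by (simp add: Gp_def)
    finally show ?thesis unfolding N1_lin by simp
  qed
  have N2: "Nk 2 F = 5"
  proof -
    have "Nk 2 F = (\<Prod>z\<in>Aset 2. 1 - z)" by (simp add: Nk_alt onA2)
    then show ?thesis by (simp add: N2_lin)
  qed
  have "M25 F = of_int (5 ^ 3 * m)"
    using M25_split[of F] N1 N2 F1 by (simp add: cpoly_one)
  with F1 N1 N2 show ?thesis by blast
qed



lemma P5Up_id:
  fixes z :: complex
  shows "(z - 1) * ((1 + z + z^2 + z^3 + z^4) * (1 + (-z + 2*z^2 - 2*z^3 + z^4) * (z^15 + 2*z^10 + 3*z^5 + 4)) - (z - 1)^4)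
     = (-z + 2*z^2 - 2*z^3 + z^4) * (z^20 + z^15 + z^10 + z^5 + 1)"
  by (simp add: algebra_simps eval_nat_numeral)

lemma alg2:
  fixes X z W :: complex
  assumes "X * (z - 1)^3 = W" "Q = (z - 1)^4"
  shows "1 - z - Q * X = (1 - z) * (1 + W)"
proof -
  have "1 - z - (z - 1)^4 * X - (1 - z) * (1 + X * (z - 1)^3) = 0"
    by (simp add: algebra_simps eval_nat_numeral)
  then show ?thesis using assms by simp
qed

lemma part2:
  assumes h: "\<not> (5::int) dvd poly h 1" and hm: "of_int m = Nk 2 (1 + [:-1, 1:] ^ 3 * h)"
  shows "\<exists>F :: int poly. M25 F = of_int (5 ^ 3 * m) \<and> poly F 1 = 5 \<and>
                 Nk 1 F = 5 \<and> Nk 2 F = of_int (5 * m)"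
proof -
  define h1 where "h1 = poly h 1"
  define c where "c = nat ((-h1) mod 5)"
  have c: "c \<in> {1,2,3,4}" and dv: "5 dvd (1 + int c^3 * h1)"
    using c_props2[of h1] h unfolding c_def h1_def by auto
  define k where "k = (1 + int c^3 * h1) div 5"
  have k: "5 * k = 1 + int c^3 * h1" using dv unfolding k_def by simp
  define F where "F = [:1,-1:] + P5 * ([:k:] * P25 - Up * Hc h c)"
  have F1: "poly F 1 = 5"
  proof -
    have "poly F 1 = 5 * (k * 5 - int c^3 * h1)"
      by (simp add: F_def P25_def P5_def Up_def poly_Hc1 poly_monom h1_def)
    also have "\<dots> = 5" using k by algebra
    finally show ?thesis .
  qed
  have onA1: "cpoly F z = 1 - z" if z: "z \<in> Aset 1" for z
    using A1_props[OF z] by (simp add: F_def)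
  have onA2: "cpoly F z = (1 - z) * cpoly (Gp h) (z^c)" if z: "z \<in> Aset 2" for z
  proof -
    have p25: "cpoly P25 z = 0" by (rule A2_props[OF z])
    have z1: "z \<noteq> 1" using z by (auto simp: Aset_def)
    have rel: "cpoly (Hc h c) z * (z - 1)^3 = (z^c - 1)^3 * cpoly h (z^c)" by (rule cpoly_Hc)
    have "(z - 1) * (cpoly P5 z * cpoly Up z - (z - 1)^4) = 0"
      using P5Up_id[of z] p25 by (simp add: cpoly_P5 cpoly_Up cpoly_P25)
    with z1 have q: "cpoly P5 z * cpoly Up z = (z - 1)^4" by simp
    have "cpoly F z = 1 - z - (cpoly P5 z * cpoly Up z) * cpoly (Hc h c) z"
      by (simp add: F_def p25 algebra_simps)
    also have "\<dots> = (1 - z) * (1 + (z^c - 1)^3 * cpoly h (z^c))"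
      using alg2[OF rel q] .
    finally show ?thesis by (simp add: cpoly_G)
  qed
  have N2: "Nk 2 F = of_int (5 * m)"
  proof -
    have "Nk 2 F = (\<Prod>z\<in>Aset 2. (1 - z) * cpoly (Gp h) (z^c))"
      by (simp add: Nk_alt onA2)
    also have "\<dots> = (\<Prod>z\<in>Aset 2. 1 - z) * (\<Prod>z\<in>Aset 2. cpoly (Gp h) (z^c))"
      by (rule prod.distrib)
    also have "(\<Prod>z\<in>Aset 2. cpoly (Gp h) (z^c)) = (\<Prod>z\<in>Aset 2. cpoly (Gp h) z)"
      by (rule prod_perm[OF _ c]) simp
    also have "\<dots> = Nk 2 (Gp h)" by (simp add: Nk_alt)
    also have "\<dots> = of_int m" using hm by (simp add: Gp_def)
    finally show ?thesis unfolding N2_lin by simp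
  qed
  have N1: "Nk 1 F = 5"
  proof -
    have "Nk 1 F = (\<Prod>z\<in>Aset 1. 1 - z)" by (simp add: Nk_alt onA1)
    then show ?thesis unfolding N1_lin by simp
  qed
  have "M25 F = of_int (5 ^ 3 * m)"
    using M25_split[of F] N1 N2 F1 by (simp add: cpoly_one)
  with F1 N1 N2 show ?thesis by blast
qed

theorem lemma3p4:
  fixes m :: int
  shows "((\<exists>h :: int poly. \<not> (5::int) dvd poly h 1 \<and>
             of_int m = Nk 1 (1 + [:-1, 1:] ^ 3 * h))
          \<longrightarrow> (\<exists>F :: int poly. M25 F = of_int (5 ^ 3 * m) \<and> poly F 1 = 5 \<and>
                 Nk 2 F = 5 \<and> Nk 1 F = of_int (5 * m)))
       \<and> ((\<exists>h :: int poly. \<not> (5::int) dvd poly h 1 \<and>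
             of_int m = Nk 2 (1 + [:-1, 1:] ^ 3 * h))
          \<longrightarrow> (\<exists>F :: int poly. M25 F = of_int (5 ^ 3 * m) \<and> poly F 1 = 5 \<and>
                 Nk 1 F = 5 \<and> Nk 2 F = of_int (5 * m)))"
  using part1 part2 by blast

end
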